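(* Consider the mixed-integer bilevel problem $$\min_{x,y}\ c_1^\top x+d_1^\top y\quad\text{s.t.}\quad A_1x+B_1y\le b_1,\qquad y\in\arg\min_{z}\{c_2^\top x+d_2^\top z:\ A_2x+B_2z\le b_2\},$$ with $x\in\mathbb{R}^{n_x}$, lower-level variables $z=(z_C,z_I)$ with $z_C\in\mathbb{R}^{n_{yC}}$ continuous and $z_I\in\{0,1\}^{n_{yI}}$ binary, $A_2\in\mathbb{R}^{m_2\times n_x}$, and $B_2=[B_{2C},B_{2I}]$ split by columns according to $(z_C,z_I)$. For a binary vector $\hat y_I\in\{0,1\}^{n_{yI}}$ and an index set $\mathcal{A}\subseteq\{1,\dots,m_2\}$ with $|\mathcal{A}|=n_{yC}$ such that the row-submatrix $B_{2C,\mathcal{A}}$ is invertible, define the affine map $$y_C^{\hat y_I,\mathcal{A}}(x)=B_{2C,\mathcal{A}}^{-1}\big(b_{2,\mathcal{A}}-B_{2I,\mathcal{A}}\hat y_I-A_{2,\mathcal{A}}x\big)$$ and the critical region $$CR(\hat y_I,\mathcal{A})=\{x\in\mathbb{R}^{n_x}:\ A_2x+B_{2C}\,y_C^{\hat y_I,\mathcal{A}}(x)+B_{2I}\hat y_I\le b_2\}.$$ Consider the following iteration (Parametric Region Search), started from some $x_0\in\mathbb{R}^{n_x}$ and without an iteration cap. At iteration $k=0,1,2,\dots$: (1) compute an optimal solution $y_k=(y_{C,k},\hat y_{I,k})$ of the lower-level problem $\min_z\{d_2^\top z: A_2x_k+B_2z\le b_2\}$ at $x=x_k$ and record it; (2)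 if $x_k\in CR_i$ for some $i\in\{0,\dots,k-1\}$, stop; (3) otherwise choose an index set $\mathcal{A}_k$ with $|\mathcal{A}_k|=n_{yC}$, $B_{2C,\mathcal{A}_k}$ invertible, such that the constraints indexed by $\mathcal{A}_k$ are active at $(x_k,y_k)$ and $y_{C,k}=y_C^{\hat y_{I,k},\mathcal{A}_k}(x_k)$, and set $CR_k=CR(\hat y_{I,k},\mathcal{A}_k)$; (4) let $x_{k+1}$ be any point of $CR_k$ (in the method, a minimizer of the upper-level objective with $y$ replaced by $(y_C^{\hat y_{I,k},\mathcal{A}_k}(x),\hat y_{I,k})$ over $x\in CR_k$ subject to the upper-level constraints), and continue with $k+1$. Assume that at every iteration the lower-level problem at $x_k$ has an optimal solution, that an index set $\mathcal{A}_k$ as in (3) exists, and that the point $x_{k+1}$ in (4) exists. Then $x_k\in CR_k$ for each $k$ at which step (3) is executed, the generated critical regions correspond to pairwise distinct pairs $(\hat y_{I,k},\mathcal{A}_k)$, and consequently the iteration stops after at most $2^{n_{yI}}\binom{m_2}{n_{yC}}+1$ iterations.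
   Context: Notation: for a matrix $M$ and index set $\mathcal{A}$ of rows, $M_{\mathcal{A}}$ denotes the submatrix formed by the rows indexed by $\mathcal{A}$; similarly $b_{2,\mathcal{A}}$ is the subvector of $b_2$. A constraint $i$ of the lower level is active at $(x,z)$ if $(A_2x+B_2z)_i=(b_2)_i$. All inequalities between vectors are componentwise. The lower-level integer variables are assumed binary. *)

theory Defs
  imports "Jordan_Normal_Form.Matrix" "Jordan_Normal_Form.DL_Submatrix"
begin

definition vec_le :: "real vec \<Rightarrow> real vec \<Rightarrow> bool" where
  "vec_le u v \<longleftrightarrow> dim_vec u = dim_vec v \<and> (\<forall>i<dim_vec v. u $ i \<le> v $ i)"

definition row_sub :: "real mat \<Rightarrow> nat set \<Rightarrow> real mat" where
  "row_sub M A = submatrix M A UNIV"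

definition sub_vec :: "real vec \<Rightarrow> nat set \<Rightarrow> real vec" where
  "sub_vec v A = vec (card {i. i < dim_vec v \<and> i \<in> A}) (\<lambda>i. v $ pick A i)"

definition mat_inv :: "real mat \<Rightarrow> real mat" where
  "mat_inv M = (SOME N. inverts_mat M N \<and> inverts_mat N M)"

definition binary_vec :: "nat \<Rightarrow> real vec \<Rightarrow> bool" where
  "binary_vec n v \<longleftrightarrow> v \<in> carrier_vec n \<and> (\<forall>i<n. v $ i = 0 \<or> v $ i = 1)"

definition yC_map :: "real mat \<Rightarrow> real mat \<Rightarrow> real mat \<Rightarrow> real vec \<Rightarrow> real vec \<Rightarrow> nat set \<Rightarrow> real vec \<Rightarrow> real vec" where
  "yC_map A2 B2C B2I b2 yI A x =
     mat_inv (row_sub B2C A) *\<^sub>v (sub_vec b2 A - row_sub B2I A *\<^sub>v yI - row_sub A2 A *\<^sub>v x)"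

definition crit_region :: "nat \<Rightarrow> real mat \<Rightarrow> real mat \<Rightarrow> real mat \<Rightarrow> real vec \<Rightarrow> real vec \<Rightarrow> nat set \<Rightarrow> real vec set" where
  "crit_region nx A2 B2C B2I b2 yI A =
     {x \<in> carrier_vec nx. vec_le (A2 *\<^sub>v x + B2C *\<^sub>v yC_map A2 B2C B2I b2 yI A x + B2I *\<^sub>v yI) b2}"

text \<open>Lower-level feasibility and optimality (objective d2^T z; the term c2^T x is constant in z).\<close>
definition ll_feasible :: "nat \<Rightarrow> nat \<Rightarrow> real mat \<Rightarrow> real mat \<Rightarrow> real mat \<Rightarrow> real vec \<Rightarrow> real vec \<Rightarrow> real vec \<Rightarrow> real vec \<Rightarrow> bool" where
  "ll_feasible nyC nyI A2 B2C B2I b2 x zC zI \<longleftrightarrow>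
     zC \<in> carrier_vec nyC \<and> binary_vec nyI zI \<and> vec_le (A2 *\<^sub>v x + B2C *\<^sub>v zC + B2I *\<^sub>v zI) b2"

definition ll_optimal :: "nat \<Rightarrow> nat \<Rightarrow> real mat \<Rightarrow> real mat \<Rightarrow> real mat \<Rightarrow> real vec \<Rightarrow> real vec \<Rightarrow> real vec \<Rightarrow> real vec \<Rightarrow> real vec \<Rightarrow> real vec \<Rightarrow> bool" where
  "ll_optimal nyC nyI A2 B2C B2I b2 d2C d2I x zC zI \<longleftrightarrow>
     ll_feasible nyC nyI A2 B2C B2I b2 x zC zI \<and>
     (\<forall>zC' zI'. ll_feasible nyC nyI A2 B2C B2I b2 x zC' zI' \<longrightarrow>
        d2C \<bullet> zC + d2I \<bullet> zI \<le> d2C \<bullet> zC' + d2I \<bullet> zI')"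

definition admissible_index_set :: "nat \<Rightarrow> nat \<Rightarrow> real mat \<Rightarrow> real mat \<Rightarrow> real mat \<Rightarrow> real vec \<Rightarrow> real vec \<Rightarrow> real vec \<Rightarrow> real vec \<Rightarrow> nat set \<Rightarrow> bool" where
  "admissible_index_set m2 nyC A2 B2C B2I b2 x yC yI A \<longleftrightarrow>
     A \<subseteq> {0..<m2} \<and> card A = nyC \<and> invertible_mat (row_sub B2C A) \<and>
     (\<forall>i\<in>A. (A2 *\<^sub>v x + B2C *\<^sub>v yC + B2I *\<^sub>v yI) $ i = b2 $ i) \<and>
     yC = yC_map A2 B2C B2I b2 yI A x"

end

theory Submission
  imports Defs
begin

lemma binary_card_le: "finite {v. binary_vec n v} \<and> card {v. binary_vec n v} \<le> 2 ^ n"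
proof -
  let ?f = "\<lambda>v::real vec. {i. i < n \<and> v $ i = 1}"
  have inj: "inj_on ?f {v. binary_vec n v}"
  proof (rule inj_onI)
    fix u v assume u: "u \<in> {v. binary_vec n v}" and v: "v \<in> {v. binary_vec n v}"
      and e: "?f u = ?f v"
    have du: "dim_vec u = n" using u unfolding binary_vec_def by simp
    have dv: "dim_vec v = n" using v unfolding binary_vec_def by simp
    show "u = v"
    proof (rule eq_vecI)
      show "dim_vec u = dim_vec v" using du dv by simp
      fix i assume i: "i < dim_vec v"
      hence i': "i < n" using dv by simp
      have "(u $ i = 1) = (i \<in> ?f u)" using i' by simp
      also have "\<dots> = (i \<in> ?f v)" using e by simp
      also have "\<dots> = (v $ i = 1)" using i' by simp
      finally have eq: "(u $ i = 1) = (v $ i = 1)" .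
      have "u $ i = 0 \<or> u $ i = 1" using u i' unfolding binary_vec_def by simp
      moreover have "v $ i = 0 \<or> v $ i = 1" using v i' unfolding binary_vec_def by simp
      ultimately show "u $ i = v $ i" using eq by linarith
    qed
  qed
  have sub: "?f ` {v. binary_vec n v} \<subseteq> Pow {0..<n}" by (auto simp del: binary_vec_def)
  have fin: "finite {v. binary_vec n v}" using inj_on_finite[OF inj sub] by simp
  have "card {v. binary_vec n v} \<le> card (Pow {0..<n})"
    using card_inj_on_le[OF inj sub] by simp
  also have "\<dots> = 2 ^ n" by (simp add: card_Pow)
  finally show ?thesis using fin by simp
qed
theorem mainTheorem1:
  fixes nx m2 nyC nyI :: nat
    and A2 B2C B2I :: "real mat" and b2 d2C d2I :: "real vec"
    and x yC yI :: "nat \<Rightarrow> real vec" and AS :: "nat \<Rightarrow> nat set"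
  defines "CR \<equiv> (\<lambda>k. crit_region nx A2 B2C B2I b2 (yI k) (AS k))"
  defines "stops \<equiv> (\<lambda>k. \<exists>i<k. x k \<in> CR i)"
  defines "reached \<equiv> (\<lambda>k. \<forall>j<k. \<not> stops j)"
  assumes dims: "A2 \<in> carrier_mat m2 nx" "B2C \<in> carrier_mat m2 nyC" "B2I \<in> carrier_mat m2 nyI"
      "b2 \<in> carrier_vec m2" "d2C \<in> carrier_vec nyC" "d2I \<in> carrier_vec nyI"
    and x0: "x 0 \<in> carrier_vec nx"
    and step1: "\<And>k. reached k \<Longrightarrow> ll_optimal nyC nyI A2 B2C B2I b2 d2C d2I (x k) (yC k) (yI k)"
    and step3: "\<And>k. reached k \<Longrightarrow> \<not> stops k \<Longrightarrow>
                  admissible_index_set m2 nyC A2 B2C B2I b2 (x k) (yC k) (yI k) (AS k)"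
    and step4: "\<And>k. reached k \<Longrightarrow> \<not> stops k \<Longrightarrow> x (Suc k) \<in> CR k"
  shows "(\<forall>k. reached k \<and> \<not> stops k \<longrightarrow> x k \<in> CR k)
    \<and> (\<forall>k k'. reached k \<and> \<not> stops k \<and> reached k' \<and> \<not> stops k' \<and> k \<noteq> k'
              \<longrightarrow> (yI k, AS k) \<noteq> (yI k', AS k'))
    \<and> (\<exists>K \<le> 2 ^ nyI * (m2 choose nyC). reached K \<and> stops K)"
proof -
  have reachedSuc: "reached (Suc k) = (reached k \<and> \<not> stops k)" for k
    unfolding reached_def using less_Suc_eq by auto
  have carr: "reached k \<Longrightarrow> x k \<in> carrier_vec nx" for k
  proof (cases k)
    case 0 then show ?thesis using x0 by simp
  next
    case (Suc j)
    assume "reached k"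
    hence "reached j" "\<not> stops j" using Suc reachedSuc by auto
    hence "x k \<in> CR j" using step4 Suc by simp
    thus ?thesis unfolding CR_def crit_region_def by simp
  qed
  have P1: "\<forall>k. reached k \<and> \<not> stops k \<longrightarrow> x k \<in> CR k"
  proof (intro allI impI)
    fix k assume h: "reached k \<and> \<not> stops k"
    have "ll_optimal nyC nyI A2 B2C B2I b2 d2C d2I (x k) (yC k) (yI k)" using step1 h by simp
    hence f: "vec_le (A2 *\<^sub>v x k + B2C *\<^sub>v yC k + B2I *\<^sub>v yI k) b2"
      unfolding ll_optimal_def ll_feasible_def by simp
    have "yC k = yC_map A2 B2C B2I b2 (yI k) (AS k) (x k)"
      using step3 h unfolding admissible_index_set_def by simp
    thus "x k \<in> CR k" using f carr h unfolding CR_def crit_region_def by simp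
  qed
  have P2: "\<forall>k k'. reached k \<and> \<not> stops k \<and> reached k' \<and> \<not> stops k' \<and> k \<noteq> k'
              \<longrightarrow> (yI k, AS k) \<noteq> (yI k', AS k')"
  proof (intro allI impI)
    have main: "(yI k, AS k) \<noteq> (yI k', AS k')"
      if h: "reached k \<and> \<not> stops k \<and> reached k' \<and> \<not> stops k'" "k < k'" for k k'
    proof
      assume e: "(yI k, AS k) = (yI k', AS k')"
      have "x k' \<in> CR k'" using P1 h by simp
      hence "x k' \<in> CR k" using e unfolding CR_def by simp
      hence "stops k'" using h(2) unfolding stops_def by blast
      thus False using h by simp
    qed
    fix k k' assume h: "reached k \<and> \<not> stops k \<and> reached k' \<and> \<not> stops k' \<and> k \<noteq> k'"
    show "(yI k, AS k) \<noteq> (yI k', AS k')"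
    proof (cases "k < k'")
      case True then show ?thesis using main h by blast
    next
      case False then have "k' < k" using h by simp
      have "(yI k', AS k') \<noteq> (yI k, AS k)" using main[of k' k] h \<open>k' < k\<close> by simp
      then show ?thesis by (metis prod.inject)
    qed
  qed
  define N where "N = 2 ^ nyI * (m2 choose nyC)"
  have P3: "\<exists>K \<le> N. reached K \<and> stops K"
  proof (rule ccontr)
    assume na: "\<not> (\<exists>K \<le> N. reached K \<and> stops K)"
    have R: "k \<le> N \<longrightarrow> reached k" for k
    proof (induction k)
      case 0 then show ?case unfolding reached_def by simp
    next
      case (Suc k) then show ?case using na reachedSuc by auto
    qed
    have RS: "k \<le> N \<Longrightarrow> reached k \<and> \<not> stops k" for k using R na by blast
    define S where "S = {v. binary_vec nyI v} \<times> {B. B \<subseteq> {0..<m2} \<and> card B = nyC}"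
    have bc: "finite {v. binary_vec nyI v}" "card {v. binary_vec nyI v} \<le> 2 ^ nyI"
      using binary_card_le by auto
    have fin2: "finite {B. B \<subseteq> {0..<m2} \<and> card B = nyC}"
      by (rule finite_subset[of _ "Pow {0..<m2}"]) auto
    have c2: "card {B. B \<subseteq> {0..<m2} \<and> card B = nyC} = m2 choose nyC"
      using n_subsets[of "{0..<m2}" nyC] by simp
    have finS: "finite S" unfolding S_def using bc fin2 by simp
    have cS: "card S \<le> N" unfolding S_def N_def card_cartesian_product c2
      using bc by simp
    have inj: "inj_on (\<lambda>k. (yI k, AS k)) {0..N}"
      proof (rule inj_onI)
      fix a b assume a: "a \<in> {0..N}" and b: "b \<in> {0..N}" and e: "(yI a, AS a) = (yI b, AS b)"
      show "a = b"
      proof (rule ccontr)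
        assume "a \<noteq> b"
        thus False using P2[rule_format, of a b] RS[of a] RS[of b] a b e by simp
      qed
    qed
    have img: "(\<lambda>k. (yI k, AS k)) ` {0..N} \<subseteq> S"
    proof
      fix p assume "p \<in> (\<lambda>k. (yI k, AS k)) ` {0..N}"
      then obtain k where k: "k \<le> N" "p = (yI k, AS k)" by auto
      have "ll_optimal nyC nyI A2 B2C B2I b2 d2C d2I (x k) (yC k) (yI k)"
        using step1 RS k by simp
      hence "binary_vec nyI (yI k)" unfolding ll_optimal_def ll_feasible_def by simp
      moreover have "AS k \<subseteq> {0..<m2} \<and> card (AS k) = nyC"
        using step3 RS k unfolding admissible_index_set_def by simp
      ultimately show "p \<in> S" unfolding S_def using k by simp
    qed
    have "card {0..N} \<le> card S" using card_inj_on_le[OF inj img finS] .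
    thus False using cS by simp
  qed
  have P3': "\<exists>K \<le> 2 ^ nyI * (m2 choose nyC). reached K \<and> stops K"
    using P3 unfolding N_def .
  show ?thesis using P1 P2 P3' by (intro conjI)
qed

end
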